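(* Let $G$ be a finite $p$-group and let $H, C_1, C_2$ be normal subgroups of $G$ such that $C_1\neq C_2$, $C_1,C_2\subseteq H$, and $|H:C_1|=|H:C_2|=p$. Then every subgroup $C$ of $H$ with $C_1\cap C_2\subseteq C$ is a normal subgroup of $G$. *)

theory Defs
  imports "HOL-Algebra.Algebra"
begin

definition finite_p_group :: "('a, 'b) monoid_scheme \<Rightarrow> nat \<Rightarrow> bool" where
  "finite_p_group G p \<longleftrightarrow> group G \<and> finite (carrier G) \<and> Factorial_Ring.prime p \<and> (\<exists>n. order G = p ^ n)"

definition sub_index :: "('a, 'b) monoid_scheme \<Rightarrow> 'a set \<Rightarrow> 'a set \<Rightarrow> nat" where
  "sub_index G H K = card (rcosets\<^bsub>G\<lparr>carrier := H\<rparr>\<^esub> K)"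

end

theory Submission
  imports Defs
begin

lemma (in group) sub_lagrange:
  assumes "subgroup A G" "subgroup B G" "A \<subseteq> B"
  shows "card (rcosets\<^bsub>G\<lparr>carrier := B\<rparr>\<^esub> A) * card A = card B"
proof -
  interpret B: group "G\<lparr>carrier := B\<rparr>" using assms(2) subgroup_imp_group by blast
  have "subgroup A (G\<lparr>carrier := B\<rparr>)" using subgroup_incl assms by blast
  from B.lagrange[OF this] show ?thesis unfolding order_def by simp
qed

lemma (in group) conj_cancel1:
  "g \<in> carrier G \<Longrightarrow> x \<in> carrier G \<Longrightarrow> inv g \<otimes> (g \<otimes> x \<otimes> inv g) \<otimes> inv (inv g) = x"
  by (simp add: m_assoc) (simp add: m_assoc[symmetric])
lemma (in group) conj_cancel2:
  "g \<in> carrier G \<Longrightarrow> x \<in> carrier G \<Longrightarrow> g \<otimes> (inv g \<otimes> x \<otimes> inv (inv g)) \<otimes> inv g = x"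
  by (simp add: m_assoc) (simp add: m_assoc[symmetric])

lemma (in group) card_sub_dvd:
  assumes "subgroup A G" "subgroup B G" "A \<subseteq> B"
  shows "card A dvd card B"
  using sub_lagrange[OF assms] by (metis dvd_triv_right)

lemma dvd_prime_sq:
  fixes m p :: nat
  assumes "Factorial_Ring.prime p" "m dvd p^2"
  shows "m = 1 \<or> m = p \<or> m = p^2"
proof -
  obtain i where "i \<le> 2" "normalize m = p ^ i" using divides_primepow[OF assms] by blast
  then have "m = p ^ i" by simp
  moreover have "i = 0 \<or> i = 1 \<or> i = 2" using \<open>i \<le> 2\<close> by auto
  ultimately show ?thesis by auto
qed

lemma lemma3_aux:
  fixes G :: "('a, 'b) monoid_scheme" (structure) and p :: nat and H C1 C2 :: "'a set"
  assumes "finite_p_group G p"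
    and "H \<lhd> G" and "C1 \<lhd> G" and "C2 \<lhd> G"
    and "C1 \<noteq> C2" and "C1 \<subseteq> H" and "C2 \<subseteq> H"
    and "sub_index G H C1 = p" and "sub_index G H C2 = p"
  shows "\<forall>C. subgroup C G \<and> C \<subseteq> H \<and> C1 \<inter> C2 \<subseteq> C \<longrightarrow> C \<lhd> G"
proof (intro allI impI)
  fix C assume HC: "subgroup C G \<and> C \<subseteq> H \<and> C1 \<inter> C2 \<subseteq> C"
  have grp: "group G" and fin: "finite (carrier G)" and pr: "Factorial_Ring.prime p"
    and "\<exists>n. order G = p^n" using assms(1) unfolding finite_p_group_def by auto
  then obtain n where ordG: "order G = p^n" by blast
  interpret group G by (rule grp)
  have p1: "p > 1" using pr prime_gt_1_nat by blast
  define D where "D = C1 \<inter> C2"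
  have sH: "subgroup H G" using assms(2) normal_imp_subgroup by blast
  have sC1: "subgroup C1 G" using assms(3) normal_imp_subgroup by blast
  have sC2: "subgroup C2 G" using assms(4) normal_imp_subgroup by blast
  have nD: "D \<lhd> G" unfolding D_def using normal_subgroup_intersect assms(3,4) by blast
  have sD: "subgroup D G" using nD normal_imp_subgroup by blast
  have sC: "subgroup C G" and CH: "C \<subseteq> H" and DC: "D \<subseteq> C" using HC D_def by auto
  have finS: "\<And>S. S \<subseteq> carrier G \<Longrightarrow> finite S" using fin finite_subset by blast
  have c1: "p * card C1 = card H"
    using sub_lagrange[OF sC1 sH assms(6)] assms(8) unfolding sub_index_def by (simp add: mult.commute)
  have c2: "p * card C2 = card H"
    using sub_lagrange[OF sC2 sH assms(7)] assms(9) unfolding sub_index_def by (simp add: mult.commute)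
  have c12: "card C1 = card C2"
  proof -
    have "p * card C1 = p * card C2" using c1 c2 by simp
    then show ?thesis using p1 by simp
  qed
  interpret SI: second_isomorphism_grp C2 G C1
    unfolding second_isomorphism_grp_def second_isomorphism_grp_axioms_def
    using assms(4) sC1 by auto
  have sK: "subgroup (C2 <#> C1) G" by (rule SI.normal_set_mult_subgroup)
  have KH: "C2 <#> C1 \<subseteq> H"
    using assms(6,7) sH unfolding set_mult_def by (auto intro: subgroup.m_closed)
  have KH_eq: "C2 <#> C1 = H"
  proof -
    have "card C2 dvd card (C2 <#> C1)"
      using card_sub_dvd[OF sC2 sK SI.H_contained_in_set_mult] .
    then obtain m where m: "card (C2 <#> C1) = card C2 * m" by blast
    have "card (C2 <#> C1) dvd card H" using card_sub_dvd[OF sK sH KH] .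
    then have "card C2 * m dvd card C2 * p" using m c2 by (simp add: mult.commute)
    moreover have "card C2 > 0" using sC2 subgroup.finite_imp_card_positive finS subgroup.subset by blast
    ultimately have "m dvd p" by simp
    then have "m = 1 \<or> m = p" using pr prime_nat_iff by blast
    moreover have "m \<noteq> 1"
    proof
      assume "m = 1"
      then have "C2 <#> C1 = C2"
        using m card_subset_eq[OF finS[OF subgroup.subset[OF sK]] SI.H_contained_in_set_mult] by simp
      then have "C1 \<subseteq> C2" using SI.S_contained_in_set_mult by simp
      then have "C1 = C2" using card_subset_eq[OF finS[OF subgroup.subset[OF sC2]]] c12 by simp
      then show False using assms(5) by simp
    qed
    ultimately have "card (C2 <#> C1) = card H" using m c2 by (simp add: mult.commute)
    then show ?thesis using card_subset_eq[OF finS[OF subgroup.subset[OF sH]] KH] by simp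
  qed
  have cD: "p * card D = card C1"
  proof -
    have "(G\<lparr>carrier := C1\<rparr> Mod (C2 \<inter> C1)) \<cong> (G\<lparr>carrier := C2 <#> C1\<rparr> Mod C2)"
      using SI.normal_intersection_quotient_isom unfolding is_iso_def by blast
    then have "card (rcosets\<^bsub>G\<lparr>carrier := C1\<rparr>\<^esub> (C2 \<inter> C1)) = card (rcosets\<^bsub>G\<lparr>carrier := H\<rparr>\<^esub> C2)"
      using iso_same_card KH_eq unfolding FactGroup_def by fastforce
    then have "card (rcosets\<^bsub>G\<lparr>carrier := C1\<rparr>\<^esub> D) = p"
      using assms(9) unfolding sub_index_def D_def by (simp add: Int_commute)
    then show ?thesis using sub_lagrange[OF sD sC1] D_def by (simp add: mult.commute)
  qed
  have dpos: "card D > 0" using sD subgroup.finite_imp_card_positive finS subgroup.subset by blast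
  have cH: "card H = p^2 * card D" using c1 cD by (metis mult.assoc power2_eq_square)

  have finH: "finite H" using finS subgroup.subset sH by blast
  have ccases: "card C = card D \<or> card C = p * card D \<or> card C = p^2 * card D"
  proof -
    obtain m where m: "card C = card D * m" using card_sub_dvd[OF sD sC DC] by blast
    have "card D * m dvd card D * p^2" using card_sub_dvd[OF sC sH CH] m cH by (simp add: mult.commute)
    then have "m dvd p^2" using dpos by simp
    then show ?thesis using dvd_prime_sq[OF pr] m by (auto simp: mult.commute)
  qed
  have DH: "D \<subseteq> H" using DC CH by blast
  show "C \<lhd> G"
  proof (cases "card C = card D")
    case True
    then have "D = C" using card_subset_eq[OF finS[OF subgroup.subset[OF sC]] DC] by simp
    then show ?thesis using nD by simp
  next
    case False
    show ?thesis
    proof (cases "card C = p^2 * card D")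
      case True
      then have "C = H" using card_subset_eq[OF finH CH] cH by simp
      then show ?thesis using assms(2) by simp
    next
      case False2: False
      with ccases False have cC: "card C = p * card D" by simp
      show ?thesis
      proof (cases "C = C1 \<or> C = C2")
        case True then show ?thesis using assms(3,4) by blast
      next
        case notC12: False
        define Xs where "Xs = {K. subgroup K G \<and> D \<subseteq> K \<and> K \<subseteq> H \<and> card K = p * card D}"
        have inter: "K \<inter> K' \<subseteq> D" if "K \<in> Xs" "K' \<in> Xs" "K \<noteq> K'" for K K'
        proof -
          have sK: "subgroup K G" "D \<subseteq> K" "card K = p * card D" using that Xs_def by auto
          have sK': "subgroup K' G" "D \<subseteq> K'" "card K' = p * card D" using that Xs_def by auto
          have sI: "subgroup (K \<inter> K') G" using subgroups_Inter_pair sK sK' by blast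
          have finK: "finite K" "finite K'" using finS subgroup.subset sK sK' by blast+
          obtain m where m: "card (K \<inter> K') = card D * m"
            using card_sub_dvd[OF sD sI] sK sK' by blast
          have "card D * m dvd card D * p" using card_sub_dvd[OF sI sK(1)] m sK by (simp add: mult.commute)
          then have "m dvd p" using dpos by simp
          then have "m = 1 \<or> m = p" using pr prime_nat_iff by blast
          moreover have "m \<noteq> p"
          proof
            assume "m = p"
            then have "K \<inter> K' = K" "K \<inter> K' = K'"
              using card_subset_eq[OF finK(1), of "K \<inter> K'"] card_subset_eq[OF finK(2), of "K \<inter> K'"] m sK sK'
              by (auto simp: mult.commute)
            then show False using that by blast
          qed
          ultimately have "card (K \<inter> K') = card D" using m by simp
          then have "D = K \<inter> K'" using card_subset_eq[OF finite_Int[OF disjI1[OF finK(1)]]] sK sK' by auto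
          then show ?thesis by simp
        qed
        define \<phi> where "\<phi> = (\<lambda>g. \<lambda>H \<in> {H. subgroup H G}. g <# H #> (inv g))"
        have act: "group_action G {H. subgroup H G} \<phi>"
          unfolding \<phi>_def by (rule action_by_conjugation_on_subgroups_set)
        define Orb where "Orb = orbit G \<phi> C"
        have conj_img: "\<phi> g K = (\<lambda>c. g \<otimes> c \<otimes> inv g) ` K" if "subgroup K G" "g \<in> carrier G" for g K
          using that unfolding \<phi>_def l_coset_def r_coset_def by auto
        have Ochar: "Orb = {(\<lambda>c. g \<otimes> c \<otimes> inv g) ` C | g. g \<in> carrier G}"
        proof (unfold Orb_def orbit_def, rule Collect_cong)
          fix y show "(\<exists>g. y = \<phi> g C \<and> g \<in> carrier G) = (\<exists>g. y = (\<lambda>c. g \<otimes> c \<otimes> inv g) ` C \<and> g \<in> carrier G)"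
            using conj_img[OF sC] by metis
        qed
        have OX: "Orb \<subseteq> Xs"
        proof
          fix K assume "K \<in> Orb"
          then obtain g where g: "g \<in> carrier G" and K: "K = (\<lambda>c. g \<otimes> c \<otimes> inv g) ` C"
            using Ochar by blast
          have "K = \<phi> g C" using conj_img[OF sC g] K by simp
          then have "subgroup K G"
            using group_action.element_image[OF act g] sC by blast
          moreover have "D \<subseteq> K"
          proof
            fix x assume x: "x \<in> D"
            have xG: "x \<in> carrier G" using x sD subgroup.subset by blast
            have y: "inv g \<otimes> x \<otimes> inv (inv g) \<in> D"
              using normal.inv_op_closed1[OF nD g x] g by simp
            have "x = g \<otimes> (inv g \<otimes> x \<otimes> inv (inv g)) \<otimes> inv g"
              using g xG by (simp only: conj_cancel2)
            then show "x \<in> K" using y DC K by blast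
          qed
          moreover have "K \<subseteq> H"
          proof
            fix y assume "y \<in> K"
            then obtain c where c: "c \<in> C" "y = g \<otimes> c \<otimes> inv g" using K by blast
            show "y \<in> H" using normal.inv_op_closed2[OF assms(2) g] c CH by blast
          qed
          moreover have "card K = card C"
          proof -
            have "inj_on (\<lambda>c. g \<otimes> c \<otimes> inv g) C"
            proof (rule inj_onI)
              fix x y assume xy: "x \<in> C" "y \<in> C" "g \<otimes> x \<otimes> inv g = g \<otimes> y \<otimes> inv g"
              have "x \<in> carrier G" "y \<in> carrier G" using xy subgroup.subset[OF sC] by auto
              then have "g \<otimes> x = g \<otimes> y" using xy(3) g r_cancel[of "g \<otimes> x" "inv g" "g \<otimes> y"] by simp
            then show "x = y" using g l_cancel \<open>x \<in> carrier G\<close> \<open>y \<in> carrier G\<close> by blast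
            qed
            then show ?thesis using K card_image by blast
          qed
          ultimately show "K \<in> Xs" using Xs_def cC by simp
        qed
        have eqi: "C = Ci" if Ci: "Ci \<lhd> G" "card Ci = card C" "Ci \<in> Orb" for Ci
        proof -
          obtain g where g: "g \<in> carrier G" and K: "Ci = (\<lambda>c. g \<otimes> c \<otimes> inv g) ` C"
            using Ochar Ci by blast
          have "C \<subseteq> Ci"
          proof
            fix x assume x: "x \<in> C"
            have xG: "x \<in> carrier G" using x sC subgroup.subset by blast
            have y: "inv g \<otimes> (g \<otimes> x \<otimes> inv g) \<otimes> inv (inv g) \<in> Ci"
            proof -
              have "g \<otimes> x \<otimes> inv g \<in> Ci" using K x by blast
              moreover have gi: "inv g \<in> carrier G" using g by simp
              ultimately show ?thesis using normal.inv_op_closed2[OF Ci(1) gi] by blast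
            qed
            moreover have "inv g \<otimes> (g \<otimes> x \<otimes> inv g) \<otimes> inv (inv g) = x"
              using g xG by (rule conj_cancel1)
            ultimately show "x \<in> Ci" by simp
          qed
          moreover have "finite Ci" using finS normal_imp_subgroup[OF Ci(1)] subgroup.subset by blast
          ultimately show "C = Ci" using card_subset_eq Ci(2) by metis
        qed
        have cC1: "card C1 = card C" using cC cD by simp
        have cC2: "card C2 = card C" using cC1 c12 by simp
        have n1: "C1 \<notin> Orb" using eqi[OF assms(3) cC1] notC12 by blast
        have n2: "C2 \<notin> Orb" using eqi[OF assms(4) cC2] notC12 by blast
        have DC1: "D \<subseteq> C1" and DC2: "D \<subseteq> C2" unfolding D_def by auto
        have "card C1 = p * card D" "card C2 = p * card D" using cD c12 by simp_all
        then have C1X: "C1 \<in> Xs" and C2X: "C2 \<in> Xs" unfolding Xs_def using sC1 sC2 assms(6,7) DC1 DC2 by blast+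
        define Fam where "Fam = insert C1 (insert C2 Orb)"
        have "Orb = (\<lambda>g. \<phi> g C) ` carrier G" unfolding Orb_def orbit_def by blast
        then have finO: "finite Orb" using fin by simp
        have finF: "finite Fam" using finO Fam_def by simp
        have cF: "card Fam = card Orb + 2" unfolding Fam_def using n1 n2 assms(5) finO by simp
        have FX: "Fam \<subseteq> Xs" using OX C1X C2X Fam_def by blast
        have Xfin: "\<And>K. K \<in> Xs \<Longrightarrow> finite K" using Xs_def finS subgroup.subset by blast
        have "card (\<Union>K\<in>Fam. K - D) = (\<Sum>K\<in>Fam. card (K - D))"
        proof (rule card_UN_disjoint[OF finF])
          show "\<forall>K\<in>Fam. finite (K - D)" using FX Xfin by blast
          show "\<forall>K\<in>Fam. \<forall>K'\<in>Fam. K \<noteq> K' \<longrightarrow> (K - D) \<inter> (K' - D) = {}"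
          proof (intro ballI impI)
            fix K K' assume "K \<in> Fam" "K' \<in> Fam" "K \<noteq> K'"
            then have "K \<inter> K' \<subseteq> D" using inter FX by blast
            then show "(K - D) \<inter> (K' - D) = {}" by blast
          qed
        qed
        also have "\<dots> = (\<Sum>K\<in>Fam. p * card D - card D)"
        proof (rule sum.cong[OF refl])
          fix K assume "K \<in> Fam"
          then have "K \<in> Xs" using FX by blast
          then show "card (K - D) = p * card D - card D"
          proof -
            have "D \<subseteq> K" "card K = p * card D" using \<open>K \<in> Xs\<close> Xs_def by auto
            moreover have "finite D" using finite_subset[OF \<open>D \<subseteq> K\<close> Xfin[OF \<open>K \<in> Xs\<close>]] .
            ultimately show ?thesis using card_Diff_subset by metis
          qed
        qed
        also have "\<dots> = card Fam * (p * card D - card D)" by simp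
        finally have eq1: "card (\<Union>K\<in>Fam. K - D) = card Fam * (p * card D - card D)" .
        have "(\<Union>K\<in>Fam. K - D) \<subseteq> H - D" using FX Xs_def by blast
        then have "card (\<Union>K\<in>Fam. K - D) \<le> card (H - D)" using finH by (intro card_mono) auto
        also have "\<dots> = p^2 * card D - card D" using card_Diff_subset[OF finite_subset[OF DH finH] DH] cH by simp
        finally have ineq: "card Fam * (p * card D - card D) \<le> p^2 * card D - card D" using eq1 by simp
        obtain q where q: "p = Suc q" using p1 by (cases p) auto
        have e1: "p * card D - card D = q * card D" using q by simp
        have e2: "p^2 * card D - card D = (q + 2) * (q * card D)" using q by (simp add: power2_eq_square algebra_simps)
        have "(card Orb + 2) * (q * card D) \<le> (q + 2) * (q * card D)"
          using ineq cF e1 e2 by simp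
        moreover have "q * card D > 0" using q p1 dpos by simp
        ultimately have "card Orb + 2 \<le> q + 2" by simp
        then have Olt: "card Orb < p" using q by simp
        have CE: "C \<in> {H. subgroup H G}" using sC by simp
        have "card Orb * card (stabilizer G \<phi> C) = p ^ n"
          using group_action.orbit_stabilizer_theorem[OF act CE] ordG Orb_def by simp
        then have "card Orb dvd p ^ n" by (metis dvd_triv_left)
        then obtain i where "normalize (card Orb) = p ^ i" using divides_primepow[OF pr] by blast
        then have "card Orb = p ^ i" by simp
        moreover have "i = 0"
        proof (rule ccontr)
          assume "i \<noteq> 0"
          then have "p ^ 1 \<le> p ^ i" using p1 by (intro power_increasing) auto
          then show False using Olt \<open>card Orb = p ^ i\<close> by simp
        qed
        ultimately have c1O: "card Orb = 1" by simp
        have COrb: "C \<in> Orb" unfolding Orb_def using group_action.orbit_refl[OF act CE] .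
        obtain z where "Orb = {z}" using card_1_singletonE[OF c1O] by blast
        then have Oeq: "Orb = {C}" using COrb by simp
        show ?thesis
          unfolding normal_inv_iff
        proof (intro conjI sC ballI)
          fix x h assume x: "x \<in> carrier G" and h: "h \<in> C"
          have "(\<lambda>c. x \<otimes> c \<otimes> inv x) ` C \<in> Orb" using Ochar x by blast
          then have "(\<lambda>c. x \<otimes> c \<otimes> inv x) ` C = C" using Oeq by blast
          then show "x \<otimes> h \<otimes> inv x \<in> C" using h by blast
        qed
      qed
    qed
  qed
qed


theorem lemma3:
  fixes G :: "('a, 'b) monoid_scheme" and p :: nat and H C1 C2 :: "'a set"
  assumes "finite_p_group G p"
    and "H \<lhd> G" and "C1 \<lhd> G" and "C2 \<lhd> G"
    and "C1 \<noteq> C2" and "C1 \<subseteq> H" and "C2 \<subseteq> H"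
    and "sub_index G H C1 = p" and "sub_index G H C2 = p"
  shows "\<forall>C. subgroup C G \<and> C \<subseteq> H \<and> C1 \<inter> C2 \<subseteq> C \<longrightarrow> C \<lhd> G"
  by (rule lemma3_aux[OF assms])

end
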